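(* Let $\mathbb{F}$ be any field and let $n\ge 1$, $0\le k\le n$, $s\ge 0$ be integers. The number of distinct zero-patterns of $(n,k,s)$-matrices over $\mathbb{F}$ is at most $\binom{n}{k}^2\cdot n^{20ks/n}$.
   Context: An $(n,k,s)$-matrix over $\mathbb{F}$ is a matrix $M\in\mathbb{F}^{n\times n}$ of rank $k$ with exactly $s$ nonzero entries, which contains rows $R_{i_1},\dots,R_{i_k}$ and columns $C_{j_1},\dots,C_{j_k}$ such that $R_{i_1},\dots,R_{i_k}$ is a basis of the row space of $M$, $C_{j_1},\dots,C_{j_k}$ is a basis of the column space of $M$, and the total number of nonzero entries in the $2k$ vectors $R_{i_1},\dots,R_{i_k},C_{j_1},\dots,C_{j_k}$ is at most $4ks/n$. The zero-pattern of a matrix $M\in\mathbb{F}^{n\times n}$ is the matrix $Z\in\{0,*\}^{n\times n}$ with $Z_{i,j}=0$ if $M_{i,j}=0$ and $Z_{i,j}=*$ otherwise. *)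

theory Defs
  imports Jordan_Normal_Form.DL_Rank
begin

context vec_space
begin

text \<open>The rows of M indexed by the (distinct) indices in I form a basis of the row space of M.
  Here the ambient dimension n of the locale is the number of columns of M.\<close>
definition is_row_basis :: "'a mat \<Rightarrow> nat set \<Rightarrow> bool" where
  "is_row_basis M I \<longleftrightarrow> I \<subseteq> {..<dim_row M} \<and> inj_on (row M) I
     \<and> lin_indpt (row M ` I) \<and> span (row M ` I) = row_space M"

text \<open>The columns of M indexed by J form a basis of the column space of M.
  Here the ambient dimension n of the locale is the number of rows of M.\<close>
definition is_col_basis :: "'a mat \<Rightarrow> nat set \<Rightarrow> bool" where
  "is_col_basis M J \<longleftrightarrow> J \<subseteq> {..<dim_col M} \<and> inj_on (col M) J
     \<and> lin_indpt (col M ` J) \<and> span (col M ` J) = col_space M"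

end

definition nnz_vec :: "'a::zero vec \<Rightarrow> nat" where
  "nnz_vec v = card {i. i < dim_vec v \<and> v $ i \<noteq> 0}"

definition nnz_mat :: "'a::zero mat \<Rightarrow> nat" where
  "nnz_mat M = card {(i, j). i < dim_row M \<and> j < dim_col M \<and> M $$ (i, j) \<noteq> 0}"

definition nks_matrix :: "nat \<Rightarrow> nat \<Rightarrow> nat \<Rightarrow> 'a::field mat \<Rightarrow> bool" where
  "nks_matrix n k s M \<longleftrightarrow>
     M \<in> carrier_mat n n \<and> vec_space.rank n M = k \<and> nnz_mat M = s \<and>
     (\<exists>I J. card I = k \<and> card J = k \<and>
        vec_space.is_row_basis n M I \<and> vec_space.is_col_basis n M J \<and>
        real ((\<Sum>i\<in>I. nnz_vec (row M i)) + (\<Sum>j\<in>J. nnz_vec (col M j)))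
          \<le> 4 * real k * real s / real n)"

text \<open>Zero pattern: True encodes *, False encodes 0.\<close>
definition zero_pattern :: "'a::zero mat \<Rightarrow> bool mat" where
  "zero_pattern M = mat (dim_row M) (dim_col M) (\<lambda>(i, j). M $$ (i, j) \<noteq> 0)"

end

theory Submission
  imports Defs "HOL-Library.Function_Algebras"
begin

lemma row_comb:
  fixes M :: "'a::field mat"
  assumes M: "M \<in> carrier_mat n n" and B: "vec_space.is_row_basis n M I" and i: "i < n"
  shows "\<exists>c. \<forall>j<n. M $$ (i,j) = (\<Sum>i'\<in>I. c i' * M $$ (i',j))"
proof -
  interpret vec_space "TYPE('a)" n .
  from B have I: "I \<subseteq> {..<n}" and inj: "inj_on (row M) I" and sp: "span (row M ` I) = row_space M"
    using M unfolding is_row_basis_def by auto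
  have finI: "finite I" using I finite_subset by blast
  have Rc: "row M ` I \<subseteq> carrier_vec n" using M by auto
  have "row M i \<in> set (rows M)" using M i unfolding rows_def by auto
  moreover have "set (rows M) \<subseteq> carrier_vec n" using M unfolding rows_def by auto
  ultimately have "row M i \<in> row_space M" unfolding row_space_def using in_own_span by blast
  then have "row M i \<in> span (row M ` I)" using sp by simp
  from finite_in_span[OF finite_imageI[OF finI] Rc this] obtain a where
    a: "lincomb a (row M ` I) = row M i" by auto
  show ?thesis
  proof (intro exI allI impI)
    fix j assume j: "j < n"
    have "M $$ (i,j) = row M i $ j" using M i j by simp
    also have "\<dots> = (\<Sum>x\<in>row M ` I. a x * x $ j)" 
      unfolding a[symmetric] by (rule lincomb_index[OF j Rc])
    also have "\<dots> = (\<Sum>i'\<in>I. a (row M i') * row M i' $ j)"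
      by (subst sum.reindex[OF inj]) simp
    also have "\<dots> = (\<Sum>i'\<in>I. (a \<circ> row M) i' * M $$ (i',j))"
      by (rule sum.cong) (use I M j in auto)
    finally show "M $$ (i,j) = (\<Sum>i'\<in>I. (a \<circ> row M) i' * M $$ (i',j))" .
  qed
qed

lemma col_indep:
  fixes M :: "'a::field mat"
  assumes M: "M \<in> carrier_mat n n" and B: "vec_space.is_col_basis n M J"
    and z: "\<forall>i<n. (\<Sum>j\<in>J. d j * M $$ (i,j)) = 0" and j0: "j0 \<in> J"
  shows "d j0 = 0"
proof (rule ccontr)
  assume nz: "d j0 \<noteq> 0"
  interpret vec_space "TYPE('a)" n .
  from B have J: "J \<subseteq> {..<n}" and inj: "inj_on (col M) J" and li: "lin_indpt (col M ` J)"
    using M unfolding is_col_basis_def by auto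
  have finJ: "finite J" using J finite_subset by blast
  have Cc: "col M ` J \<subseteq> carrier_vec n" using M by auto
  define a where "a = (\<lambda>v. d (the_inv_into J (col M) v))"
  have aa: "\<And>j. j \<in> J \<Longrightarrow> a (col M j) = d j" unfolding a_def using the_inv_into_f_f[OF inj] by simp
  have "lincomb a (col M ` J) = 0\<^sub>v n"
  proof (rule eq_vecI)
    show "dim_vec (lincomb a (col M ` J)) = dim_vec (0\<^sub>v n)"
      using lincomb_dim[OF finite_imageI[OF finJ] Cc] by simp
    fix i assume "i < dim_vec (0\<^sub>v n)"
    then have i: "i < n" by simp
    have "lincomb a (col M ` J) $ i = (\<Sum>x\<in>col M ` J. a x * x $ i)" by (rule lincomb_index[OF i Cc])
    also have "\<dots> = (\<Sum>j\<in>J. a (col M j) * col M j $ i)" by (subst sum.reindex[OF inj]) simp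
    also have "\<dots> = (\<Sum>j\<in>J. d j * M $$ (i,j))" by (rule sum.cong) (use J M i aa in auto)
    also have "\<dots> = 0" using z i by simp
    finally show "lincomb a (col M ` J) $ i = 0\<^sub>v n $ i" using i by simp
  qed
  then have "lin_dep (col M ` J)" unfolding lin_dep_def
    using j0 nz aa finJ by (intro exI[of _ "col M ` J"] exI[of _ a] exI[of _ "col M j0"]) auto
  with li show False by simp
qed

definition ext_idx :: "nat \<Rightarrow> (nat \<Rightarrow> nat) \<Rightarrow> nat \<Rightarrow> nat \<Rightarrow> nat" where
  "ext_idx k \<iota> i a = (if a < k then \<iota> a else i)"

definition Asub :: "nat \<Rightarrow> (nat \<Rightarrow> nat) \<Rightarrow> (nat \<Rightarrow> nat) \<Rightarrow> 'a mat \<Rightarrow> 'a mat" where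
  "Asub k \<iota> \<kappa> M = mat k k (\<lambda>(a,b). M $$ (\<iota> a, \<kappa> b))"

definition Bsub :: "nat \<Rightarrow> (nat \<Rightarrow> nat) \<Rightarrow> (nat \<Rightarrow> nat) \<Rightarrow> nat \<Rightarrow> nat \<Rightarrow> 'a mat \<Rightarrow> 'a mat" where
  "Bsub k \<iota> \<kappa> i j M = mat (Suc k) (Suc k) (\<lambda>(a,b). M $$ (ext_idx k \<iota> i a, ext_idx k \<kappa> j b))"

definition B0sub :: "nat \<Rightarrow> (nat \<Rightarrow> nat) \<Rightarrow> (nat \<Rightarrow> nat) \<Rightarrow> nat \<Rightarrow> nat \<Rightarrow> 'a::zero mat \<Rightarrow> 'a mat" where
  "B0sub k \<iota> \<kappa> i j M = mat (Suc k) (Suc k) (\<lambda>(a,b). if a = k \<and> b = k then 0 else M $$ (ext_idx k \<iota> i a, ext_idx k \<kappa> j b))"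

lemma sum_bij_reindex:
  assumes "bij_betw \<iota> {..<k} I"
  shows "(\<Sum>i'\<in>I. g i') = (\<Sum>a<k. g (\<iota> a))"
  using assms by (metis bij_betw_def sum.reindex_cong)

context
  fixes M :: "'a::field mat" and n k :: nat and I J :: "nat set" and \<iota> \<kappa> :: "nat \<Rightarrow> nat"
  assumes M: "M \<in> carrier_mat n n"
    and RB: "vec_space.is_row_basis n M I" and CB: "vec_space.is_col_basis n M J"
    and bi: "bij_betw \<iota> {..<k} I" and bk: "bij_betw \<kappa> {..<k} J"
begin

lemma I_sub: "I \<subseteq> {..<n}" using RB M unfolding vec_space.is_row_basis_def by auto
lemma J_sub: "J \<subseteq> {..<n}" using CB M unfolding vec_space.is_col_basis_def by auto

lemma iota_lt: "a < k \<Longrightarrow> \<iota> a < n" using bi I_sub bij_betwE by blast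
lemma kappa_lt: "a < k \<Longrightarrow> \<kappa> a < n" using bk J_sub bij_betwE by blast

lemma det_Asub_nz: "det (Asub k \<iota> \<kappa> M) \<noteq> 0"
proof
  assume "det (Asub k \<iota> \<kappa> M) = 0"
  moreover have Ac: "Asub k \<iota> \<kappa> M \<in> carrier_mat k k" unfolding Asub_def by simp
  ultimately obtain v where v: "v \<in> carrier_vec k" "v \<noteq> 0\<^sub>v k" "Asub k \<iota> \<kappa> M *\<^sub>v v = 0\<^sub>v k"
    using det_0_iff_vec_prod_zero by blast
  define d where "d = (\<lambda>j. v $ (inv_into {..<k} \<kappa> j))"
  have dk: "b < k \<Longrightarrow> d (\<kappa> b) = v $ b" for b
    unfolding d_def using bk by (simp add: bij_betw_def)
  have zI: "(\<Sum>j\<in>J. d j * M $$ (\<iota> a, j)) = 0" if a: "a < k" for a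
  proof -
    have "(\<Sum>j\<in>J. d j * M $$ (\<iota> a, j)) = (\<Sum>b<k. v $ b * M $$ (\<iota> a, \<kappa> b))"
      by (simp add: sum_bij_reindex[OF bk] dk)
    also have "\<dots> = (Asub k \<iota> \<kappa> M *\<^sub>v v) $ a"
      using a v(1) unfolding Asub_def
      by (auto simp: scalar_prod_def atLeast0LessThan intro!: sum.cong)
    also have "\<dots> = 0" using v(3) a by simp
    finally show ?thesis .
  qed
  have z: "\<forall>i<n. (\<Sum>j\<in>J. d j * M $$ (i,j)) = 0"
  proof (intro allI impI)
    fix i assume i: "i < n"
    obtain c where c: "\<forall>j<n. M $$ (i,j) = (\<Sum>i'\<in>I. c i' * M $$ (i',j))"
      using row_comb[OF M RB i] by blast
    have "(\<Sum>j\<in>J. d j * M $$ (i,j)) = (\<Sum>j\<in>J. d j * (\<Sum>i'\<in>I. c i' * M $$ (i',j)))"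
      using c J_sub by (intro sum.cong) auto
    also have "\<dots> = (\<Sum>i'\<in>I. c i' * (\<Sum>j\<in>J. d j * M $$ (i',j)))"
      by (simp add: sum_distrib_left sum.swap[of _ J] algebra_simps)
    also have "\<dots> = (\<Sum>a<k. c (\<iota> a) * (\<Sum>j\<in>J. d j * M $$ (\<iota> a,j)))"
      by (rule sum_bij_reindex[OF bi])
    also have "\<dots> = 0" using zI by simp
    finally show "(\<Sum>j\<in>J. d j * M $$ (i,j)) = 0" .
  qed
  have "v = 0\<^sub>v k"
  proof (rule eq_vecI)
    fix b assume "b < dim_vec (0\<^sub>v k)"
    then have b: "b < k" by simp
    have "\<kappa> b \<in> J" using bk b bij_betwE by blast
    then have "d (\<kappa> b) = 0" using col_indep[OF M CB z] by blast
    then show "v $ b = 0\<^sub>v k $ b" using dk b by simp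
  qed (use v in simp)
  with v(2) show False by simp
qed

lemma det_Bsub_zero:
  assumes i: "i < n" and j: "j < n"
  shows "det (Bsub k \<iota> \<kappa> i j M) = 0"
proof -
  obtain c where c: "\<forall>j<n. M $$ (i,j) = (\<Sum>i'\<in>I. c i' * M $$ (i',j))"
    using row_comb[OF M RB i] by blast
  define B where "B = Bsub k \<iota> \<kappa> i j M"
  have Bc: "B \<in> carrier_mat (Suc k) (Suc k)" unfolding B_def Bsub_def by simp
  define y where "y = vec (Suc k) (\<lambda>a. if a < k then - c (\<iota> a) else (1::'a))"
  have yc: "y \<in> carrier_vec (Suc k)" unfolding y_def by simp
  have ynz: "y \<noteq> 0\<^sub>v (Suc k)"
  proof
    assume "y = 0\<^sub>v (Suc k)"
    then have "y $ k = 0" by simp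
    then show False unfolding y_def by simp
  qed
  have ext_lt: "b < Suc k \<Longrightarrow> ext_idx k \<kappa> j b < n" for b
    using kappa_lt j unfolding ext_idx_def by auto
  have "transpose_mat B *\<^sub>v y = 0\<^sub>v (Suc k)"
  proof (rule eq_vecI)
    fix b assume "b < dim_vec (0\<^sub>v (Suc k))"
    then have b: "b < Suc k" by simp
    let ?x = "ext_idx k \<kappa> j b"
    have "(transpose_mat B *\<^sub>v y) $ b = (\<Sum>a<Suc k. B $$ (a,b) * y $ a)"
      using b Bc yc by (auto simp: scalar_prod_def atLeast0LessThan intro!: sum.cong)
    also have "\<dots> = (\<Sum>a<k. B $$ (a,b) * y $ a) + B $$ (k,b) * y $ k" by simp
    also have "\<dots> = (\<Sum>a<k. - c (\<iota> a) * M $$ (\<iota> a, ?x)) + M $$ (i, ?x)"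
      using b unfolding B_def Bsub_def y_def ext_idx_def by (auto intro!: sum.cong)
    also have "\<dots> = - (\<Sum>i'\<in>I. c i' * M $$ (i', ?x)) + M $$ (i, ?x)"
      by (simp add: sum_bij_reindex[OF bi] sum_negf)
    also have "\<dots> = 0" using c ext_lt[OF b] by simp
    finally show "(transpose_mat B *\<^sub>v y) $ b = 0\<^sub>v (Suc k) $ b" using b by simp
  qed (use Bc in simp)
  then have "det (transpose_mat B) = 0"
    using det_0_iff_vec_prod_zero[of "transpose_mat B" "Suc k"] Bc yc ynz by auto
  then show ?thesis using det_transpose[OF Bc] unfolding B_def by simp
qed

end

lemma det_Bsub_split:
  fixes M :: "'a::comm_ring_1 mat"
  shows "det (Bsub k \<iota> \<kappa> i j M) = det (B0sub k \<iota> \<kappa> i j M) + M $$ (i,j) * det (Asub k \<iota> \<kappa> M)"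
proof -
  define B where "B = Bsub k \<iota> \<kappa> i j M"
  define B0 where "B0 = B0sub k \<iota> \<kappa> i j M"
  have Bc: "B \<in> carrier_mat (Suc k) (Suc k)" unfolding B_def Bsub_def by simp
  have B0c: "B0 \<in> carrier_mat (Suc k) (Suc k)" unfolding B0_def B0sub_def by simp
  have del: "mat_delete B k b = mat_delete B0 k b" if "b < Suc k" for b
    unfolding mat_delete_def B_def B0_def Bsub_def B0sub_def
    by (rule eq_matI) auto
  have delA: "mat_delete B k k = Asub k \<iota> \<kappa> M"
    unfolding mat_delete_def B_def Bsub_def Asub_def ext_idx_def
    by (rule eq_matI) auto
  have ent: "b < k \<Longrightarrow> B $$ (k,b) = B0 $$ (k,b)" for b by (simp add: B_def B0_def Bsub_def B0sub_def)
  have "det B = (\<Sum>b<Suc k. B $$ (k,b) * cofactor B k b)" by (rule laplace_expansion_row[OF Bc]) simp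
  also have "\<dots> = (\<Sum>b<k. B $$ (k,b) * cofactor B k b) + B $$ (k,k) * cofactor B k k" by simp
  also have "(\<Sum>b<k. B $$ (k,b) * cofactor B k b) = (\<Sum>b<k. B0 $$ (k,b) * cofactor B0 k b)"
    using ent del by (intro sum.cong) (auto simp: cofactor_def)
  also have "B $$ (k,k) * cofactor B k k = M $$ (i,j) * det (Asub k \<iota> \<kappa> M)"
  proof -
    have "B $$ (k,k) = M $$ (i,j)" by (simp add: B_def Bsub_def ext_idx_def)
    then show ?thesis by (simp add: cofactor_def delA)
  qed
  finally have "det B = (\<Sum>b<k. B0 $$ (k,b) * cofactor B0 k b) + M $$ (i,j) * det (Asub k \<iota> \<kappa> M)" .
  moreover have "det B0 = (\<Sum>b<Suc k. B0 $$ (k,b) * cofactor B0 k b)" by (rule laplace_expansion_row[OF B0c]) simp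
  hence "det B0 = (\<Sum>b<k. B0 $$ (k,b) * cofactor B0 k b)" by (simp add: B0_def B0sub_def)
  ultimately show ?thesis unfolding B_def B0_def by simp
qed

interpretation fs: Vector_Spaces.vector_space "\<lambda>(c::'a::field) (f::'b\<Rightarrow>'a). (\<lambda>x. c * f x)"
  by unfold_locales (auto simp: fun_eq_iff algebra_simps)

definition monf :: "('v \<Rightarrow> 'b \<Rightarrow> 'a::comm_semiring_1) \<Rightarrow> 'v set \<Rightarrow> ('v \<Rightarrow> nat) \<Rightarrow> 'b \<Rightarrow> 'a" where
  "monf x U e = (\<lambda>w. \<Prod>u\<in>U. x u w ^ e u)"

definition restr :: "'b set \<Rightarrow> ('b \<Rightarrow> 'a::zero) \<Rightarrow> 'b \<Rightarrow> 'a" where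
  "restr W g = (\<lambda>w. if w \<in> W then g w else 0)"

definition Mons :: "('v \<Rightarrow> 'b \<Rightarrow> 'a::comm_semiring_1) \<Rightarrow> 'v set \<Rightarrow> nat \<Rightarrow> ('b \<Rightarrow> 'a) set" where
  "Mons x U D = monf x U ` (PiE U (\<lambda>_. {..D}))"

definition PS :: "('v \<Rightarrow> 'b \<Rightarrow> 'a::field) \<Rightarrow> 'v set \<Rightarrow> 'b set \<Rightarrow> nat \<Rightarrow> ('b \<Rightarrow> 'a) set" where
  "PS x U W D = fs.span (restr W ` Mons x U D)"

lemma card_Mons: assumes "finite U" shows "card (Mons x U D) \<le> (D+1) ^ card U"
proof -
  have "card (Mons x U D) \<le> card (PiE U (\<lambda>_. {..D}))" unfolding Mons_def by (rule card_image_le, rule finite_PiE) (use assms in auto)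
  also have "\<dots> = (D+1) ^ card U" by (simp add: card_PiE assms)
  finally show ?thesis .
qed

lemma finite_Mons: "finite U \<Longrightarrow> finite (Mons x U D)"
  unfolding Mons_def by (simp add: finite_PiE)

lemma PS_mono: "D \<le> D' \<Longrightarrow> PS x U W D \<subseteq> PS x U W D'"
  unfolding PS_def Mons_def
  by (intro fs.span_mono image_mono PiE_mono) auto

lemma restr_mult: "restr W f * restr W g = restr W (f * g :: 'b \<Rightarrow> 'a::mult_zero)"
  by (auto simp: restr_def fun_eq_iff)

lemma monf_mult: "monf x U e * monf x U e' = monf x U (restrict (\<lambda>u. e u + e' u) U)"
  by (auto simp: monf_def fun_eq_iff power_add prod.distrib intro!: prod.cong)

lemma PS_mult_base:
  assumes "f \<in> restr W ` Mons x U d1" "g \<in> restr W ` Mons x U d2"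
  shows "f * g \<in> PS x U W (d1 + d2)"
proof -
  from assms obtain e e' where e: "e \<in> PiE U (\<lambda>_. {..d1})" "e' \<in> PiE U (\<lambda>_. {..d2})"
    and fg: "f = restr W (monf x U e)" "g = restr W (monf x U e')" unfolding Mons_def by auto
  have "restrict (\<lambda>u. e u + e' u) U \<in> PiE U (\<lambda>_. {..d1+d2})" using e by (auto simp: PiE_def Pi_def add_mono)
  then have "restr W (monf x U (restrict (\<lambda>u. e u + e' u) U)) \<in> restr W ` Mons x U (d1+d2)"
    unfolding Mons_def by blast
  then show ?thesis unfolding fg restr_mult monf_mult PS_def by (rule fs.span_base)
qed

lemma scale_mult_left: "(\<lambda>x. c * f x) * g = (\<lambda>x. c * (f * g) x :: 'a::comm_ring_1)"
  by (auto simp: fun_eq_iff mult.assoc)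
lemma scale_mult_right: "f * (\<lambda>x. c * g x) = (\<lambda>x. c * (f * g) x :: 'a::comm_ring_1)"
  by (auto simp: fun_eq_iff mult.left_commute)

lemma PS_mult:
  assumes f: "f \<in> PS x U W d1" and g: "g \<in> PS x U W d2"
  shows "f * g \<in> PS x U W (d1 + d2)"
proof -
  let ?S = "fs.span (restr W ` Mons x U (d1 + d2))"
  have step: "f * g \<in> ?S" if g: "g \<in> restr W ` Mons x U d2" and f: "f \<in> PS x U W d1" for f g
  proof -
    have sub: "fs.subspace {f. f * g \<in> ?S}"
    proof (rule fs.subspaceI)
      fix c a assume "a \<in> {f. f * g \<in> ?S}"
      then show "(\<lambda>x. c * a x) \<in> {f. f * g \<in> ?S}"
        by (simp only: mem_Collect_eq scale_mult_left) (rule fs.span_scale)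
    qed (auto simp: distrib_right fs.span_add fs.span_zero)
    have base: "\<And>f. f \<in> restr W ` Mons x U d1 \<Longrightarrow> f * g \<in> ?S"
      using PS_mult_base[OF _ g] unfolding PS_def by blast
    from fs.span_induct[OF f[unfolded PS_def] sub] base show ?thesis by blast
  qed
  have sub: "fs.subspace {g. f * g \<in> ?S}"
  proof (rule fs.subspaceI)
    fix c a assume "a \<in> {g. f * g \<in> ?S}"
    then show "(\<lambda>x. c * a x) \<in> {g. f * g \<in> ?S}"
      by (simp only: mem_Collect_eq scale_mult_right) (rule fs.span_scale)
  qed (auto simp: distrib_left fs.span_add fs.span_zero)
  from fs.span_induct[OF g[unfolded PS_def] sub] step[OF _ f] show ?thesis unfolding PS_def by blast
qed

lemma fun_sum_apply: "(\<Sum>a\<in>A. f a) x = (\<Sum>a\<in>A. f a x :: 'a::comm_monoid_add)"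
  by (induct A rule: infinite_finite_induct) auto

lemma PS_zero: "0 \<in> PS x U W D" unfolding PS_def by (rule fs.span_zero)

lemma PS_restr0: "(\<forall>w\<in>W. g w = 0) \<Longrightarrow> restr W g \<in> PS x U W D"
proof -
  assume "\<forall>w\<in>W. g w = 0"
  then have "restr W g = 0" by (auto simp: restr_def fun_eq_iff)
  then show ?thesis using PS_zero by simp
qed

lemma PS_one: "restr W (\<lambda>_. 1) \<in> PS x U W D"
proof -
  have "restrict (\<lambda>_. 0) U \<in> PiE U (\<lambda>_. {..D})" by auto
  moreover have "monf x U (restrict (\<lambda>_. 0) U) = (\<lambda>_. 1)" by (auto simp: monf_def fun_eq_iff)
  ultimately have "restr W (\<lambda>_. 1) \<in> restr W ` Mons x U D" unfolding Mons_def by (metis image_eqI)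
  then show ?thesis unfolding PS_def by (rule fs.span_base)
qed

lemma PS_var: assumes "finite U" "u \<in> U" "1 \<le> D" shows "restr W (x u) \<in> PS x U W D"
proof -
  let ?e = "restrict (\<lambda>v. if v = u then 1 else 0) U"
  have "?e \<in> PiE U (\<lambda>_. {..D})" using assms by auto
  moreover have "monf x U ?e = x u"
  proof
    fix w
    have "monf x U ?e w = (\<Prod>v\<in>U. (if v = u then x v w else 1))"
      unfolding monf_def by (rule prod.cong) auto
    also have "\<dots> = x u w" using assms by (simp add: prod.delta)
    finally show "monf x U ?e w = x u w" .
  qed
  ultimately have "restr W (x u) \<in> restr W ` Mons x U D" unfolding Mons_def by (metis image_eqI)
  then show ?thesis unfolding PS_def by (rule fs.span_base)
qed

lemma PS_prod:
  assumes "finite A" "\<forall>a\<in>A. restr W (F a) \<in> PS x U W d"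
  shows "restr W (\<lambda>w. \<Prod>a\<in>A. F a w) \<in> PS x U W (card A * d)"
  using assms
proof (induct A rule: finite_induct)
  case empty
  then show ?case using PS_one by simp
next
  case (insert a A)
  have "restr W (F a) * restr W (\<lambda>w. \<Prod>a\<in>A. F a w) \<in> PS x U W (d + card A * d)"
    by (rule PS_mult) (use insert in auto)
  moreover have "restr W (F a) * restr W (\<lambda>w. \<Prod>a\<in>A. F a w) = restr W (\<lambda>w. \<Prod>a\<in>insert a A. F a w)"
    using insert by (auto simp: restr_def fun_eq_iff)
  ultimately show ?case using insert by simp
qed

lemma PS_lincomb:
  assumes "\<forall>p\<in>P. restr W (F p) \<in> PS x U W d"
  shows "restr W (\<lambda>w. \<Sum>p\<in>P. c p * F p w) \<in> PS x U W d"
proof -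
  have "restr W (\<lambda>w. \<Sum>p\<in>P. c p * F p w) = (\<Sum>p\<in>P. (\<lambda>w. c p * restr W (F p) w))"
    by (auto simp: restr_def fun_eq_iff fun_sum_apply)
  moreover have "(\<Sum>p\<in>P. (\<lambda>w. c p * restr W (F p) w)) \<in> PS x U W d"
    unfolding PS_def using assms unfolding PS_def by (intro fs.span_sum fs.span_scale) auto
  ultimately show ?thesis by simp
qed

lemma rbg:
  fixes f :: "'p \<Rightarrow> 'b \<Rightarrow> 'a::field" and pat :: "'b \<Rightarrow> 'p set"
  assumes U: "finite U"
    and P1: "\<forall>w\<in>X. finite (pat w) \<and> card (pat w) = s"
    and P2: "\<forall>w\<in>X. \<forall>p. f p w \<noteq> 0 \<longleftrightarrow> p \<in> pat w"
    and P3: "\<forall>w\<in>X. \<forall>p\<in>pat w. restr X (f p) \<in> PS x U X d"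
  shows "card (pat ` X) \<le> (s*d+1) ^ card U"
proof -
  define g where "g = (\<lambda>\<sigma>. restr X (\<lambda>w. \<Prod>p\<in>\<sigma>. f p w))"
  have gin: "g \<sigma> \<in> PS x U X (s*d)" if "\<sigma> \<in> pat ` X" for \<sigma>
  proof -
    from that obtain w where w: "w \<in> X" "\<sigma> = pat w" by auto
    have "g \<sigma> \<in> PS x U X (card \<sigma> * d)" unfolding g_def
      by (rule PS_prod) (use P1 P3 w in auto)
    then show ?thesis using P1 w by simp
  qed
  have ev: "g \<sigma> w \<noteq> 0 \<longleftrightarrow> \<sigma> = pat w" if "\<sigma> \<in> pat ` X" "w \<in> X" for \<sigma> w
  proof
    assume gz: "g \<sigma> w \<noteq> 0"
    from that obtain w' where w': "w' \<in> X" "\<sigma> = pat w'" by auto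
    then have fs: "finite \<sigma>" using P1 by auto
    have nz: "\<forall>p\<in>\<sigma>. f p w \<noteq> 0" using gz that fs unfolding g_def restr_def by (auto simp: prod_zero_iff)
    then have sub: "\<sigma> \<subseteq> pat w" using P2 that(2) by auto
    from w' have "card \<sigma> = card (pat w)" using P1 that(2) by auto
    then show "\<sigma> = pat w" using card_subset_eq[OF _ sub] P1 that(2) by auto
  next
    assume "\<sigma> = pat w"
    then show "g \<sigma> w \<noteq> 0" using P1 P2 that unfolding g_def restr_def by auto
  qed
  have inj: "inj_on g (pat ` X)"
  proof (rule inj_onI)
    fix \<sigma> \<tau> assume s: "\<sigma> \<in> pat ` X" and t: "\<tau> \<in> pat ` X" and eq: "g \<sigma> = g \<tau>"
    from s obtain w where w: "w \<in> X" "\<sigma> = pat w" by auto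
    have "g \<sigma> w \<noteq> 0" using ev[OF s w(1)] w by simp
    then have "g \<tau> w \<noteq> 0" using eq by simp
    then show "\<sigma> = \<tau>" using ev[OF t w(1)] w by simp
  qed
  have indep: "fs.independent (g ` pat ` X)"
  proof
    assume "fs.dependent (g ` pat ` X)"
    then obtain t u v0 where t: "finite t" "t \<subseteq> g ` pat ` X" "(\<Sum>v\<in>t. (\<lambda>x. u v * v x)) = 0"
      and v0: "v0 \<in> t" "u v0 \<noteq> 0"
      unfolding fs.dependent_explicit by blast
    from v0 t obtain w0 where w0: "w0 \<in> X" "v0 = g (pat w0)" by auto
    have "0 = (\<Sum>v\<in>t. (\<lambda>x. u v * v x)) w0" using t by simp
    also have "\<dots> = (\<Sum>v\<in>t. u v * v w0)" by (simp add: fun_sum_apply)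
    also have "\<dots> = u v0 * v0 w0 + (\<Sum>v\<in>t-{v0}. u v * v w0)" by (rule sum.remove[OF t(1) v0(1)])
    also have "(\<Sum>v\<in>t-{v0}. u v * v w0) = 0"
    proof (rule sum.neutral, rule ballI)
      fix v assume "v \<in> t - {v0}"
      then have v: "v \<in> t" "v \<noteq> v0" by auto
      from v t obtain w where w: "w \<in> X" "v = g (pat w)" by auto
      have "pat w \<noteq> pat w0" using v w w0 by auto
      then have "v w0 = 0" using ev[of "pat w" w0] w w0 by auto
      then show "u v * v w0 = 0" by simp
    qed
    finally have "u v0 * v0 w0 = 0" by simp
    moreover have "v0 w0 \<noteq> 0" using ev[of "pat w0" w0] w0 by auto
    ultimately show False using v0 by simp
  qed
  have T: "finite (restr X ` Mons x U (s*d))" by (rule finite_imageI, rule finite_Mons[OF U])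
  have "card (g ` pat ` X) \<le> card (restr X ` Mons x U (s*d))"
    using fs.independent_span_bound[OF T indep] gin unfolding PS_def by blast
  also have "\<dots> \<le> card (Mons x U (s*d))" by (rule card_image_le) (rule finite_Mons[OF U])
  also have "\<dots> \<le> (s*d+1) ^ card U" by (rule card_Mons[OF U])
  finally show ?thesis using card_image[OF inj] by simp
qed

definition Box :: "nat \<Rightarrow> nat set \<Rightarrow> nat set \<Rightarrow> (nat \<times> nat) set" where
  "Box n I J = {(i,j). i < n \<and> j < n \<and> (i \<in> I \<or> j \<in> J)}"

definition patm :: "nat \<Rightarrow> 'a::zero mat \<Rightarrow> (nat \<times> nat) set" where
  "patm n M = {(i,j). i < n \<and> j < n \<and> M $$ (i,j) \<noteq> 0}"

definition Xcl :: "nat \<Rightarrow> nat \<Rightarrow> nat set \<Rightarrow> nat set \<Rightarrow> (nat \<times> nat) set \<Rightarrow> 'a::field mat set" where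
  "Xcl n s I J U = {M. M \<in> carrier_mat n n \<and> nnz_mat M = s \<and> vec_space.is_row_basis n M I
     \<and> vec_space.is_col_basis n M J \<and> (\<forall>p\<in>Box n I J - U. M $$ p = 0)}"

lemma Box_sub: "Box n I J \<subseteq> {..<n} \<times> {..<n}" unfolding Box_def by (auto simp: subset_iff)

lemma finite_Box: "finite (Box n I J)" by (rule finite_subset[OF Box_sub]) simp

lemma class_bound:
  assumes I: "I \<subseteq> {..<n}" "card I = k" and J: "J \<subseteq> {..<n}" "card J = k"
    and U: "U \<subseteq> Box n I J"
  shows "card (patm n ` (Xcl n s I J U :: 'a::field mat set)) \<le> (s*(k+1)+1) ^ card U"
proof -
  let ?X = "Xcl n s I J U :: 'a mat set"
  have fI: "finite I" using finite_subset[OF I(1)] by simp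
  have fJ: "finite J" using finite_subset[OF J(1)] by simp
  obtain \<iota> where bi: "bij_betw \<iota> {..<k} I" using ex_bij_betw_nat_finite[OF fI] I(2) by (auto simp: atLeast0LessThan)
  obtain \<kappa> where bk: "bij_betw \<kappa> {..<k} J" using ex_bij_betw_nat_finite[OF fJ] J(2) by (auto simp: atLeast0LessThan)
  have iI: "a < k \<Longrightarrow> \<iota> a \<in> I" for a using bi bij_betwE by blast
  have kJ: "a < k \<Longrightarrow> \<kappa> a \<in> J" for a using bk bij_betwE by blast
  define f :: "nat \<times> nat \<Rightarrow> 'a mat \<Rightarrow> 'a" where
    "f = (\<lambda>(i,j) M. if i < n \<and> j < n then (if i \<in> I \<or> j \<in> J then M $$ (i,j) else det (B0sub k \<iota> \<kappa> i j M)) else 0)"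
  define x :: "nat \<times> nat \<Rightarrow> 'a mat \<Rightarrow> 'a" where "x = (\<lambda>u M. M $$ u)"
  have fU: "finite U" using finite_subset[OF U finite_Box] .
  have P1: "\<forall>w\<in>?X. finite (patm n w) \<and> card (patm n w) = s"
  proof
    fix M assume M: "M \<in> ?X"
    have "patm n M \<subseteq> {..<n} \<times> {..<n}" unfolding patm_def by (auto simp: subset_iff)
    then have "finite (patm n M)" using finite_subset by (metis finite_SigmaI finite_lessThan)
    moreover have "patm n M = {(i, j). i < dim_row M \<and> j < dim_col M \<and> M $$ (i, j) \<noteq> 0}"
      using M unfolding Xcl_def patm_def by auto
    ultimately show "finite (patm n M) \<and> card (patm n M) = s" using M unfolding Xcl_def nnz_mat_def by auto
  qed
  have P2: "\<forall>w\<in>?X. \<forall>p. f p w \<noteq> 0 \<longleftrightarrow> p \<in> patm n w"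
  proof (intro ballI allI)
    fix M and p :: "nat \<times> nat" assume M: "M \<in> ?X"
    obtain i j where p: "p = (i,j)" by fastforce
    have Mc: "M \<in> carrier_mat n n" and RB: "vec_space.is_row_basis n M I" and CB: "vec_space.is_col_basis n M J"
      using M unfolding Xcl_def by auto
    show "f p M \<noteq> 0 \<longleftrightarrow> p \<in> patm n M"
    proof (cases "i < n \<and> j < n \<and> \<not> (i \<in> I \<or> j \<in> J)")
      case True
      have "det (Bsub k \<iota> \<kappa> i j M) = 0" using det_Bsub_zero[OF Mc RB CB bi bk] True by blast
      then have "det (B0sub k \<iota> \<kappa> i j M) = - (M $$ (i,j) * det (Asub k \<iota> \<kappa> M))"
        using det_Bsub_split[of k \<iota> \<kappa> i j M] by (simp add: eq_neg_iff_add_eq_0 add.commute)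
      moreover have "det (Asub k \<iota> \<kappa> M) \<noteq> 0" using det_Asub_nz[OF Mc RB CB bi bk] .
      moreover have "f p M = det (B0sub k \<iota> \<kappa> i j M)" using True by (simp add: p f_def)
      moreover have "p \<in> patm n M \<longleftrightarrow> M $$ (i,j) \<noteq> 0" using True by (simp add: p patm_def)
      ultimately show ?thesis by simp
    next
      case False
      then show ?thesis unfolding p f_def patm_def by auto
    qed
  qed
  have varPS: "restr ?X (\<lambda>M. M $$ q) \<in> PS x U ?X D" if q: "q \<in> Box n I J" and D: "1 \<le> D" for q D
  proof (cases "q \<in> U")
    case True
    then show ?thesis using PS_var[OF fU True D, where x=x and W="?X"] unfolding x_def by simp
  next
    case False
    have "\<forall>w\<in>?X. w $$ q = 0" using q False unfolding Xcl_def by blast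
    then show ?thesis by (intro PS_restr0)
  qed
  have P3: "\<forall>w\<in>?X. \<forall>p\<in>patm n w. restr ?X (f p) \<in> PS x U ?X (k+1)"
  proof (intro ballI)
    fix M and p :: "nat \<times> nat" assume M: "M \<in> ?X" and pp: "p \<in> patm n M"
    obtain i j where p: "p = (i,j)" and ij: "i < n" "j < n" using pp unfolding patm_def by auto
    show "restr ?X (f p) \<in> PS x U ?X (k+1)"
    proof (cases "i \<in> I \<or> j \<in> J")
      case True
      then have "f p = (\<lambda>M. M $$ (i,j))" using ij unfolding f_def p by auto
      moreover have "(i,j) \<in> Box n I J" using True ij unfolding Box_def by auto
      ultimately show ?thesis using varPS by simp
    next
      case False
      define E where "E = (\<lambda>a b (M::'a mat). if a = k \<and> b = k then 0 else M $$ (ext_idx k \<iota> i a, ext_idx k \<kappa> j b))"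
      have "f p = (\<lambda>M. det (B0sub k \<iota> \<kappa> i j M))" using ij False unfolding f_def p by auto
      also have "\<dots> = (\<lambda>M. \<Sum>\<pi>\<in>{\<pi>. \<pi> permutes {0..<Suc k}}. signof \<pi> * (\<Prod>a\<in>{0..<Suc k}. E a (\<pi> a) M))"
      proof
        fix M :: "'a mat"
        have Bc: "B0sub k \<iota> \<kappa> i j M \<in> carrier_mat (Suc k) (Suc k)" unfolding B0sub_def by simp
        show "det (B0sub k \<iota> \<kappa> i j M) = (\<Sum>\<pi>\<in>{\<pi>. \<pi> permutes {0..<Suc k}}. signof \<pi> * (\<Prod>a\<in>{0..<Suc k}. E a (\<pi> a) M))"
          unfolding det_def'[OF Bc]
        proof (rule sum.cong[OF refl])
          fix \<pi> assume \<pi>: "\<pi> \<in> {\<pi>. \<pi> permutes {0..<Suc k}}"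
          have "(\<Prod>a\<in>{0..<Suc k}. B0sub k \<iota> \<kappa> i j M $$ (a, \<pi> a)) = (\<Prod>a\<in>{0..<Suc k}. E a (\<pi> a) M)"
          proof (rule prod.cong[OF refl])
            fix a assume a: "a \<in> {0..<Suc k}"
            then have "\<pi> a < Suc k" using \<pi> permutes_in_image[of \<pi> "{0..<Suc k}" a] by auto
            then show "B0sub k \<iota> \<kappa> i j M $$ (a, \<pi> a) = E a (\<pi> a) M"
              using a unfolding B0sub_def E_def by simp
          qed
          then show "signof \<pi> * (\<Prod>a\<in>{0..<Suc k}. B0sub k \<iota> \<kappa> i j M $$ (a, \<pi> a)) = signof \<pi> * (\<Prod>a\<in>{0..<Suc k}. E a (\<pi> a) M)"
            by simp
        qed
      qed
      finally have fp: "f p = \<dots>" .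
      have Ein: "restr ?X (E a b) \<in> PS x U ?X 1" if ab: "a < Suc k" "b < Suc k" for a b
      proof (cases "a = k \<and> b = k")
        case True
        then show ?thesis by (intro PS_restr0) (simp add: E_def)
      next
        case False
        let ?q = "(ext_idx k \<iota> i a, ext_idx k \<kappa> j b)"
        have "?q \<in> Box n I J" using False ab ij iI kJ I J unfolding Box_def ext_idx_def by auto
        moreover have "E a b = (\<lambda>M. M $$ ?q)" using False unfolding E_def by auto
        ultimately show ?thesis using varPS by simp
      qed
      have "restr ?X (\<lambda>M. \<Prod>a\<in>{0..<Suc k}. E a (\<pi> a) M) \<in> PS x U ?X (k+1)"
        if "\<pi> \<in> {\<pi>. \<pi> permutes {0..<Suc k}}" for \<pi>
      proof -
        have "\<forall>a\<in>{0..<Suc k}. restr ?X (E a (\<pi> a)) \<in> PS x U ?X 1"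
          using Ein that permutes_in_image[of \<pi> "{0..<Suc k}"] by auto
        from PS_prod[OF _ this] show ?thesis by simp
      qed
      then show ?thesis unfolding fp by (intro PS_lincomb) auto
    qed
  qed
  have "card (patm n ` ?X) \<le> (s*(k+1)+1) ^ card U"
    by (rule rbg[OF fU P1 P2 P3])
  then show ?thesis .
qed

lemma count_subsets:
  assumes B: "finite B"
  shows "card {U. U \<subseteq> B \<and> card U \<le> T} \<le> (card B + 1) ^ T"
proof -
  let ?P = "PiE {..<T} (\<lambda>_. insert None (Some ` B))"
  let ?G = "\<lambda>F. {b. Some b \<in> F ` {..<T}}"
  have sub: "{U. U \<subseteq> B \<and> card U \<le> T} \<subseteq> ?G ` ?P"
  proof
    fix U assume U: "U \<in> {U. U \<subseteq> B \<and> card U \<le> T}"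
    then have UB: "U \<subseteq> B" and cU: "card U \<le> T" by simp_all
    have fU: "finite U" using finite_subset[OF UB B] .
    obtain xs where xs: "set xs = U" "distinct xs" using finite_distinct_list[OF fU] by blast
    have "length xs = card U" using distinct_card[OF xs(2)] xs(1) by simp
    then have len: "length xs \<le> T" using cU by simp
    have xsB: "i < length xs \<Longrightarrow> xs ! i \<in> B" for i using nth_mem[of i xs] xs(1) UB by blast
    define F where "F = restrict (\<lambda>i. if i < length xs then Some (xs ! i) else None) {..<T}"
    have FP: "F \<in> ?P" unfolding F_def using xsB by (auto simp: PiE_def Pi_def)
    have GF: "?G F = U"
    proof -
      have "\<forall>b. Some b \<in> F ` {..<T} \<longleftrightarrow> (\<exists>i<length xs. xs ! i = b)"
        unfolding F_def using len by (auto simp: image_iff)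
      moreover have "\<forall>b. (\<exists>i<length xs. xs ! i = b) \<longleftrightarrow> b \<in> U" using xs(1) by (auto simp: in_set_conv_nth)
      ultimately show ?thesis by (simp add: set_eq_iff)
    qed
    show "U \<in> ?G ` ?P" using image_eqI[where f="?G", OF GF[symmetric] FP] .
  qed
  have fP: "finite ?P" by (rule finite_PiE) (simp_all add: B)
  have "card {U. U \<subseteq> B \<and> card U \<le> T} \<le> card (?G ` ?P)" by (rule card_mono[OF finite_imageI[OF fP] sub])
  also have "\<dots> \<le> card ?P" by (rule card_image_le[OF fP])
  also have "card ?P = (card B + 1) ^ T"
  proof -
    have "card (insert None (Some ` B)) = card B + 1" using B by (simp add: card_image)
    then show ?thesis by (simp add: card_PiE)
  qed
  finally show ?thesis .
qed

lemma numeric: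
  fixes n k s :: nat
  assumes "10 * k < n" "1 \<le> k" "s \<le> n * n"
  shows "(2*k*n+1) * (s*(k+1)+1) \<le> n ^ 5"
proof -
  have n5: "n \<ge> 11" using assms by linarith
  have "(10*k+1) * n \<le> n * n" using assms(1) by (intro mult_right_mono) auto
  then have h1: "5 * (2*k*n+1) \<le> n * n" using n5 by (simp add: algebra_simps)
  have h2: "5 * k + 5 \<le> n" using assms n5 by linarith
  have "5 * (s*(k+1)+1) = s * (5*k+5) + 5" by (simp add: algebra_simps)
  also have "\<dots> \<le> s * n + 5" using h2 by simp
  also have "\<dots> \<le> n*n*n + 5" using assms(3) by simp
  finally have h3: "5 * (s*(k+1)+1) \<le> n*n*n + 5" .
  have "25 * ((2*k*n+1) * (s*(k+1)+1)) = (5 * (2*k*n+1)) * (5 * (s*(k+1)+1))"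
  proof -
    have gen: "\<And>a b::nat. (5*a)*(5*b) = 25*(a*b)" by (simp add: mult_ac)
    show ?thesis by (rule gen[symmetric])
  qed
  also have "\<dots> \<le> (n*n) * (n*n*n+5)" by (rule mult_mono[OF h1 h3]) simp_all
  also have "\<dots> \<le> (n*n) * (25 * (n*n*n))"
  proof -
    have "1 \<le> n*n*n" using n5 by simp
    then have c: "n*n*n + 5 \<le> 25*(n*n*n)" by linarith
    then show ?thesis by (rule mult_left_mono) simp
  qed
  also have "\<dots> = 25 * n^5"
  proof -
    have p5: "n ^ 5 = (n*n)*(n*n*n)" by (simp add: eval_nat_numeral mult_ac)
    show ?thesis unfolding p5 by (rule mult.left_commute)
  qed
  finally show ?thesis by simp
qed

lemma nnz_row: assumes "M \<in> carrier_mat n n" "i < n"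
  shows "nnz_vec (row M i) = card {j. j < n \<and> M $$ (i,j) \<noteq> 0}"
  unfolding nnz_vec_def using assms by (intro arg_cong[where f=card] Collect_cong) auto

lemma nnz_col: assumes "M \<in> carrier_mat n n" "j < n"
  shows "nnz_vec (col M j) = card {i. i < n \<and> M $$ (i,j) \<noteq> 0}"
  unfolding nnz_vec_def using assms by (intro arg_cong[where f=card] Collect_cong) auto

lemma cardU_le:
  assumes M: "M \<in> carrier_mat n n" and I: "I \<subseteq> {..<n}" and J: "J \<subseteq> {..<n}"
  shows "card (Box n I J \<inter> {p. M $$ p \<noteq> 0}) \<le> (\<Sum>i\<in>I. nnz_vec (row M i)) + (\<Sum>j\<in>J. nnz_vec (col M j))"
proof -
  have fI: "finite I" using finite_subset[OF I] by simp
  have fJ: "finite J" using finite_subset[OF J] by simp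
  define A where "A = (\<Union>i\<in>I. {i} \<times> {j. j < n \<and> M $$ (i,j) \<noteq> 0})"
  define B where "B = (\<Union>j\<in>J. {i. i < n \<and> M $$ (i,j) \<noteq> 0} \<times> {j})"
  have fA: "finite A" unfolding A_def using fI by (intro finite_UN_I) auto
  have fB: "finite B" unfolding B_def using fJ by (intro finite_UN_I) auto
  have sub: "Box n I J \<inter> {p. M $$ p \<noteq> 0} \<subseteq> A \<union> B"
  proof
    fix p assume p: "p \<in> Box n I J \<inter> {p. M $$ p \<noteq> 0}"
    obtain i j where pij: "p = (i,j)" by fastforce
    from p have "i < n" "j < n" "i \<in> I \<or> j \<in> J" "M $$ (i,j) \<noteq> 0" unfolding pij Box_def by auto
    then show "p \<in> A \<union> B" unfolding pij A_def B_def by blast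
  qed
  have "card (Box n I J \<inter> {p. M $$ p \<noteq> 0}) \<le> card (A \<union> B)"
    by (rule card_mono[OF _ sub]) (simp add: fA fB)
  also have "\<dots> \<le> card A + card B" by (rule card_Un_le)
  also have "card A \<le> (\<Sum>i\<in>I. card ({i} \<times> {j. j < n \<and> M $$ (i,j) \<noteq> 0}))"
    unfolding A_def by (rule card_UN_le[OF fI])
  also have "\<dots> = (\<Sum>i\<in>I. nnz_vec (row M i))"
    by (rule sum.cong[OF refl]) (use I M in \<open>auto simp: card_cartesian_product_singleton nnz_row\<close>)
  also have "card B \<le> (\<Sum>j\<in>J. card ({i. i < n \<and> M $$ (i,j) \<noteq> 0} \<times> {j}))"
    unfolding B_def by (rule card_UN_le[OF fJ])
  also have "\<dots> = (\<Sum>j\<in>J. nnz_vec (col M j))"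
  proof (rule sum.cong[OF refl])
    fix j assume "j \<in> J"
    then have j: "j < n" using J by auto
    have "card ({i. i < n \<and> M $$ (i,j) \<noteq> 0} \<times> {j}) = card {i. i < n \<and> M $$ (i,j) \<noteq> 0}"
      by (simp add: card_cartesian_product)
    then show "card ({i. i < n \<and> M $$ (i,j) \<noteq> 0} \<times> {j}) = nnz_vec (col M j)" using nnz_col[OF M j] by simp
  qed
  finally show ?thesis by simp
qed

theorem lemma2p3:
  fixes n k s :: nat
  assumes "n \<ge> 1" and "k \<le> n"
  shows "real (card {zero_pattern M | M :: 'a::field mat. nks_matrix n k s M})
           \<le> real (n choose k) ^ 2 * real n powr (20 * real k * real s / real n)"
proof -
  have n1: "n \<ge> 1" and kn: "k \<le> n" using assms by auto
  define N where "N = {M :: 'a mat. nks_matrix n k s M}"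
  define Pat where "Pat = patm n ` N"
  define emb :: "(nat \<times> nat) set \<Rightarrow> bool mat" where "emb = (\<lambda>\<sigma>. mat n n (\<lambda>(i,j). (i,j) \<in> \<sigma>))"
  define Sq where "Sq = {..<n} \<times> {..<n}"
  have fSq: "finite Sq" unfolding Sq_def by simp
  have cSq: "card Sq = n * n" unfolding Sq_def by (simp add: card_cartesian_product)
  have Ncar: "M \<in> carrier_mat n n" if "M \<in> N" for M using that unfolding N_def nks_matrix_def by simp
  have Nnnz: "nnz_mat M = s" if "M \<in> N" for M using that unfolding N_def nks_matrix_def by simp
  have patSq: "patm n M \<subseteq> Sq" for M :: "'a mat" unfolding patm_def Sq_def by (auto simp: subset_iff)
  have patcard: "card (patm n M) = s" if "M \<in> N" for M
  proof -
    have "patm n M = {(i, j). i < dim_row M \<and> j < dim_col M \<and> M $$ (i, j) \<noteq> 0}"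
      using Ncar[OF that] unfolding patm_def by auto
    then show ?thesis using Nnnz[OF that] unfolding nnz_mat_def by simp
  qed
  have ZP: "{zero_pattern M | M :: 'a mat. nks_matrix n k s M} = emb ` Pat"
  proof -
    have "zero_pattern M = emb (patm n M)" if "M \<in> N" for M
      unfolding zero_pattern_def emb_def patm_def using Ncar[OF that] by (intro eq_matI) auto
    then have "zero_pattern ` N = (\<lambda>M. emb (patm n M)) ` N" by (rule image_cong[OF refl])
    moreover have "{zero_pattern M | M :: 'a mat. nks_matrix n k s M} = zero_pattern ` N"
      unfolding N_def by (rule setcompr_eq_image)
    ultimately show ?thesis unfolding Pat_def by (simp add: image_image)
  qed
  have PatSub: "Pat \<subseteq> {\<sigma>. \<sigma> \<subseteq> Sq \<and> card \<sigma> = s}"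
    unfolding Pat_def using patSq patcard by blast
  have finPat: "finite Pat" 
    by (rule finite_subset[OF PatSub]) (use fSq in simp)
  have c1: "card {zero_pattern M | M :: 'a mat. nks_matrix n k s M} \<le> card Pat"
    unfolding ZP by (rule card_image_le[OF finPat])
  have Cge1: "1 \<le> real (n choose k) ^ 2"
  proof -
    have "1 \<le> n choose k" using kn by (simp add: Suc_leI)
    then show ?thesis by simp
  qed
  have n0: "0 < real n" using n1 by simp
  show ?thesis
  proof (cases "Pat = {}")
    case True
    then have "card {zero_pattern M | M :: 'a mat. nks_matrix n k s M} = 0" using c1 by simp
    then show ?thesis using n0 by simp
  next
    case False
    then obtain \<sigma> where "\<sigma> \<in> Pat" by blast
    then have "\<sigma> \<subseteq> Sq" "card \<sigma> = s" using PatSub by auto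
    then have sn: "s \<le> n * n" using card_mono[OF fSq] cSq by metis
    have pow1: "real n ^ m = real n powr real m" for m using powr_realpow[OF n0] by simp
    show ?thesis
    proof (cases "n \<le> 10 * k")
      case True
      have "card Pat \<le> card {\<sigma>. \<sigma> \<subseteq> Sq \<and> card \<sigma> = s}"
        by (rule card_mono[OF _ PatSub]) (use fSq in simp)
      also have "\<dots> = (n*n) choose s" using n_subsets[OF fSq] cSq by simp
      also have "\<dots> \<le> (n*n) ^ s" by (rule binomial_le_pow[OF sn])
      finally have "real (card Pat) \<le> real ((n*n)^s)" by (simp only: of_nat_le_iff)
      also have "\<dots> = real n ^ (2*s)" by (simp add: power_mult power2_eq_square)
      also have "\<dots> = real n powr real (2*s)" by (rule pow1)
      also have "\<dots> \<le> real n powr (20 * real k * real s / real n)"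
      proof (rule powr_mono)
        have "real n * real (2*s) \<le> 20 * real k * real s"
        proof -
          have "real n \<le> 10 * real k" using True by linarith
          then have "real n * real s \<le> 10 * real k * real s" by (intro mult_right_mono) auto
          then show ?thesis by simp
        qed
        then show "real (2*s) \<le> 20 * real k * real s / real n" using n0 by (simp add: field_simps)
      qed (use n1 in simp)
      finally have "real (card Pat) \<le> real n powr (20 * real k * real s / real n)" .
      moreover have "real n powr (20 * real k * real s / real n) \<le> real (n choose k) ^ 2 * real n powr (20 * real k * real s / real n)"
        using mult_right_mono[OF Cge1 powr_ge_zero] by simp
      moreover have "real (card {zero_pattern M | M :: 'a mat. nks_matrix n k s M}) \<le> real (card Pat)"
        using c1 by simp
      ultimately show ?thesis by linarith
    next
      case False
      then have k10: "10 * k < n" by simp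
      define T where "T = nat \<lfloor>4 * real k * real s / real n\<rfloor>"
      define Ks where "Ks = {I. I \<subseteq> {..<n} \<and> card I = k}"
      define Uset where "Uset = (\<lambda>I J. {U. U \<subseteq> Box n I J \<and> card U \<le> T})"
      define Tr where "Tr = (SIGMA I:Ks. SIGMA J:Ks. Uset I J)"
      define cls where "cls = (\<lambda>(I,J,U). patm n ` (Xcl n s I J U :: 'a mat set))"
      define Dp where "Dp = s*(k+1)+1"
      define Bx where "Bx = 2*k*n+1"
      have fKs: "finite Ks" by (rule finite_subset[of _ "Pow {..<n}"]) (auto simp: Ks_def)
      have cKs: "card Ks = n choose k" using n_subsets[of "{..<n}" k] unfolding Ks_def by simp
      have fUs: "finite (Uset I J)" for I J
        by (rule finite_subset[of _ "Pow (Box n I J)"]) (auto simp: Uset_def finite_Box)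
      have cUs: "card (Uset I J) \<le> Bx ^ T" if "I \<in> Ks" "J \<in> Ks" for I J
      proof -
        have I: "I \<subseteq> {..<n}" "card I = k" and J: "J \<subseteq> {..<n}" "card J = k" using that unfolding Ks_def by auto
        have fI: "finite I" using finite_subset[OF I(1)] by simp
        have fJ: "finite J" using finite_subset[OF J(1)] by simp
        have "Box n I J \<subseteq> I \<times> {..<n} \<union> {..<n} \<times> J" unfolding Box_def by (auto simp: subset_iff)
        then have "card (Box n I J) \<le> card (I \<times> {..<n} \<union> {..<n} \<times> J)"
          by (rule card_mono[rotated]) (simp add: fI fJ)
        also have "\<dots> \<le> card (I \<times> {..<n}) + card ({..<n} \<times> J)" by (rule card_Un_le)
        also have "\<dots> = k * n + n * k" using I J by (simp add: card_cartesian_product)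
        also have "\<dots> = 2 * k * n" by (simp add: mult.commute[of n k])
        finally have cB: "card (Box n I J) + 1 \<le> Bx" unfolding Bx_def by simp
        have "card (Uset I J) \<le> (card (Box n I J) + 1) ^ T" unfolding Uset_def by (rule count_subsets[OF finite_Box])
        also have "\<dots> \<le> Bx ^ T" by (rule power_mono[OF cB]) simp
        finally show ?thesis .
      qed
      have fTr: "finite Tr" unfolding Tr_def using fKs fUs by (intro finite_SigmaI) auto
      have cTr: "card Tr \<le> (n choose k)^2 * Bx ^ T"
      proof -
        have "card Tr = (\<Sum>I\<in>Ks. \<Sum>J\<in>Ks. card (Uset I J))"
          unfolding Tr_def using fKs fUs by (simp add: card_SigmaI)
        also have "\<dots> \<le> (\<Sum>I\<in>Ks. \<Sum>J\<in>Ks. Bx ^ T)" using cUs by (intro sum_mono) auto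
        also have "\<dots> = (n choose k)^2 * Bx ^ T" using cKs by (simp add: power2_eq_square)
        finally show ?thesis .
      qed
      have ccls: "card (cls t) \<le> Dp ^ T" if "t \<in> Tr" for t
      proof -
        obtain I J U where t: "t = (I,J,U)" by (cases t) auto
        have I: "I \<subseteq> {..<n}" "card I = k" and J: "J \<subseteq> {..<n}" "card J = k"
          and U: "U \<subseteq> Box n I J" "card U \<le> T" using that unfolding t Tr_def Ks_def Uset_def by auto
        have "card (cls t) \<le> Dp ^ card U" unfolding t cls_def Dp_def using class_bound[OF I J U(1)] by simp
        also have "\<dots> \<le> Dp ^ T" by (rule power_increasing[OF U(2)]) (simp add: Dp_def)
        finally show ?thesis .
      qed
      have cover: "Pat \<subseteq> (\<Union>t\<in>Tr. cls t)"
      proof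
        fix \<tau> assume "\<tau> \<in> Pat"
        then obtain M where M: "M \<in> N" and \<tau>: "\<tau> = patm n M" unfolding Pat_def by blast
        have Mc: "M \<in> carrier_mat n n" and Mn: "nnz_mat M = s" using Ncar[OF M] Nnnz[OF M] by auto
        from M obtain I J where IJ: "card I = k" "card J = k" and RB: "vec_space.is_row_basis n M I"
          and CB: "vec_space.is_col_basis n M J"
          and sb: "real ((\<Sum>i\<in>I. nnz_vec (row M i)) + (\<Sum>j\<in>J. nnz_vec (col M j))) \<le> 4 * real k * real s / real n"
          unfolding N_def nks_matrix_def by blast
        have I: "I \<subseteq> {..<n}" using RB Mc unfolding vec_space.is_row_basis_def by simp
        have J: "J \<subseteq> {..<n}" using CB Mc unfolding vec_space.is_col_basis_def by simp
        define U where "U = Box n I J \<inter> {p. M $$ p \<noteq> 0}"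
        have "card U \<le> (\<Sum>i\<in>I. nnz_vec (row M i)) + (\<Sum>j\<in>J. nnz_vec (col M j))"
          unfolding U_def by (rule cardU_le[OF Mc I J])
        then have "real (card U) \<le> 4 * real k * real s / real n" using sb by linarith
        then have cU: "card U \<le> T" unfolding T_def by (rule le_nat_floor)
        have tr: "(I,J,U) \<in> Tr" unfolding Tr_def Ks_def Uset_def U_def using I J IJ cU U_def by auto
        have "M \<in> Xcl n s I J U" unfolding Xcl_def U_def using Mc Mn RB CB by auto
        then have "\<tau> \<in> cls (I,J,U)" unfolding cls_def \<tau> by simp
        then show "\<tau> \<in> (\<Union>t\<in>Tr. cls t)" using tr by blast
      qed
      have "card Pat \<le> card (\<Union>t\<in>Tr. cls t)"
      proof (rule card_mono[OF _ cover])
        have "(\<Union>t\<in>Tr. cls t) \<subseteq> Pow Sq"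
        proof
          fix \<tau> assume "\<tau> \<in> (\<Union>t\<in>Tr. cls t)"
          then obtain t where "t \<in> Tr" "\<tau> \<in> cls t" by blast
          then obtain M :: "'a mat" where "\<tau> = patm n M" unfolding cls_def by (cases t) auto
          then show "\<tau> \<in> Pow Sq" using patSq by simp
        qed
        then show "finite (\<Union>t\<in>Tr. cls t)" by (rule finite_subset) (simp add: fSq)
      qed
      also have "\<dots> \<le> (\<Sum>t\<in>Tr. card (cls t))" by (rule card_UN_le[OF fTr])
      also have "\<dots> \<le> (\<Sum>t\<in>Tr. Dp ^ T)" using ccls by (intro sum_mono) auto
      also have "\<dots> = card Tr * Dp ^ T" by simp
      also have "\<dots> \<le> (n choose k)^2 * Bx ^ T * Dp ^ T" using cTr by (intro mult_right_mono) auto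
      also have "\<dots> = (n choose k)^2 * (Bx * Dp) ^ T" by (simp add: power_mult_distrib)
      finally have main: "card Pat \<le> (n choose k)^2 * (Bx * Dp) ^ T" .
      have ex0: "0 \<le> 20 * real k * real s / real n" by simp
      have Tle: "real T \<le> 4 * real k * real s / real n"
      proof -
        have "0 \<le> 4 * real k * real s / real n" by simp
        then have "real T = real_of_int \<lfloor>4 * real k * real s / real n\<rfloor>" unfolding T_def by simp
        also have "\<dots> \<le> 4 * real k * real s / real n" by (rule of_int_floor_le)
        finally show ?thesis .
      qed
      have "real (card Pat) \<le> real (n choose k) ^ 2 * real n powr (20 * real k * real s / real n)"
      proof (cases "k = 0")
        case True
        then have "T = 0" unfolding T_def by simp
        then have "real (card Pat) \<le> real (n choose k) ^ 2" using main by (simp add: of_nat_le_iff[symmetric] del: of_nat_le_iff)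
        moreover have "1 \<le> real n powr (20 * real k * real s / real n)"
          by (rule ge_one_powr_ge_zero) (use n1 in simp_all)
        ultimately show ?thesis using Cge1 by (simp add: order_trans[OF _ mult_left_mono[where c="real (n choose k) ^ 2" and a=1, simplified]])
      next
        case False
        then have "1 \<le> k" by simp
        have Q: "Bx * Dp \<le> n ^ 5" unfolding Bx_def Dp_def by (rule numeric[OF k10 \<open>1 \<le> k\<close> sn])
        have "(Bx * Dp) ^ T \<le> (n ^ 5) ^ T" by (rule power_mono[OF Q]) simp
        then have "card Pat \<le> (n choose k)^2 * n ^ (5 * T)"
          using main by (metis le_trans mult_left_mono power_mult zero_le)
        then have "real (card Pat) \<le> real (n choose k) ^ 2 * real n ^ (5 * T)"
          by (metis of_nat_le_iff of_nat_mult of_nat_power)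
        also have "real n ^ (5 * T) = real n powr real (5 * T)" by (rule pow1)
        also have "\<dots> \<le> real n powr (20 * real k * real s / real n)"
          by (rule powr_mono) (use Tle n1 in simp_all)
        finally show ?thesis by (simp add: mult_left_mono)
      qed
      moreover have "real (card {zero_pattern M | M :: 'a mat. nks_matrix n k s M}) \<le> real (card Pat)"
        using c1 by simp
      ultimately show ?thesis by linarith
    qed
  qed
qed

end
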